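(* For every graph $G$, $\hom(S_{2,1^0};G)^3\cdot\hom(S_{2,1^3};G)\ge \hom(S_{2,1^2};G)^3$.
   Context: All graphs are finite; $\hom(H;G)$ is the number of graph homomorphisms from $H$ to $G$. For $k\ge0$, $S_{2,1^k}$ is the tree with vertex set $\{1,\ldots,k+3\}$ and edge set $\{\{1,j\}:2\le j\le k+2\}\cup\{\{k+2,k+3\}\}$; in particular $S_{2,1^0}$ is the path with two edges. *)

theory Defs
  imports Main "HOL-Library.FuncSet"
begin

definition simple_graph :: "'a set \<Rightarrow> 'a set set \<Rightarrow> bool" where
  "simple_graph V E \<longleftrightarrow> finite V \<and> (\<forall>e\<in>E. e \<subseteq> V \<and> card e = 2)"

definition homs :: "'b set \<Rightarrow> 'b set set \<Rightarrow> 'a set \<Rightarrow> 'a set set \<Rightarrow> ('b \<Rightarrow> 'a) set" where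
  "homs VH EH V E = {f \<in> VH \<rightarrow>\<^sub>E V. \<forall>e\<in>EH. f ` e \<in> E}"

definition hom_count :: "'b set \<Rightarrow> 'b set set \<Rightarrow> 'a set \<Rightarrow> 'a set set \<Rightarrow> nat" where
  "hom_count VH EH V E = card (homs VH EH V E)"

definition S21_V :: "nat \<Rightarrow> nat set" where
  "S21_V k = {1..k+3}"

definition S21_E :: "nat \<Rightarrow> nat set set" where
  "S21_E k = {{1, j} | j. 2 \<le> j \<and> j \<le> k + 2} \<union> {{k + 2, k + 3}}"

abbreviation hom_S21 :: "nat \<Rightarrow> 'a set \<Rightarrow> 'a set set \<Rightarrow> nat" where
  "hom_S21 k V E \<equiv> hom_count (S21_V k) (S21_E k) V E"

end

theory Submission
  imports Defs "HOL-Analysis.Convex"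
begin


definition nbr :: "'a set \<Rightarrow> 'a set set \<Rightarrow> 'a \<Rightarrow> 'a set" where
  "nbr V E x = {y\<in>V. {x,y} \<in> E}"

definition TT :: "nat \<Rightarrow> 'a set \<Rightarrow> 'a set set \<Rightarrow> 'a \<Rightarrow> 'a \<Rightarrow> nat \<Rightarrow> 'a set" where
  "TT k V E x y i = (if i = 1 then {x} else if i = k+2 then {y} else if i = k+3 then nbr V E y else nbr V E x)"

lemma homs_eq:
  "homs (S21_V k) (S21_E k) V E = (\<Union>x\<in>V. \<Union>y\<in>nbr V E x. PiE {1..k+3} (TT k V E x y))"
proof (intro equalityI subsetI)
  fix f assume f: "f \<in> homs (S21_V k) (S21_E k) V E"
  hence fE: "f \<in> {1..k+3} \<rightarrow>\<^sub>E V" and fe: "\<And>e. e \<in> S21_E k \<Longrightarrow> f ` e \<in> E"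
    by (auto simp: homs_def S21_V_def)
  have e1: "\<And>j. 2 \<le> j \<Longrightarrow> j \<le> k+2 \<Longrightarrow> {f 1, f j} \<in> E"
    using fe[of "{1,_}"] by (auto simp: S21_E_def)
  have e2: "{f (k+2), f (k+3)} \<in> E" using fe[of "{k+2,k+3}"] by (auto simp: S21_E_def)
  have x: "f 1 \<in> V" using fE by auto
  have y: "f (k+2) \<in> nbr V E (f 1)" using fE e1[of "k+2"] by (auto simp: nbr_def)
  have "f \<in> PiE {1..k+3} (TT k V E (f 1) (f (k+2)))"
  proof (rule PiE_I)
    fix i assume i: "i \<in> {1..k+3}"
    show "f i \<in> TT k V E (f 1) (f (k + 2)) i"
      using i fE e1[of i] e2 by (auto simp: TT_def nbr_def)
  next
    fix i assume "i \<notin> {1..k+3}" thus "f i = undefined" using fE by auto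
  qed
  thus "f \<in> (\<Union>x\<in>V. \<Union>y\<in>nbr V E x. PiE {1..k+3} (TT k V E x y))" using x y by blast
next
  fix f assume "f \<in> (\<Union>x\<in>V. \<Union>y\<in>nbr V E x. PiE {1..k+3} (TT k V E x y))"
  then obtain x y where x: "x \<in> V" and y: "y \<in> nbr V E x" and f: "f \<in> PiE {1..k+3} (TT k V E x y)"
    by blast
  have fi: "\<And>i. i \<in> {1..k+3} \<Longrightarrow> f i \<in> TT k V E x y i" using f by blast
  have f1: "f 1 = x" using fi[of 1] by (simp add: TT_def)
  have f2: "f (k+2) = y" using fi[of "k+2"] by (simp add: TT_def)
  have f3: "f (k+3) \<in> nbr V E y" using fi[of "k+3"] by (simp add: TT_def)
  have fj: "f j \<in> nbr V E x" if "2 \<le> j" "j \<le> k+1" for j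
  proof -
    have "f j \<in> TT k V E x y j" using fi[of j] that by simp
    thus ?thesis using that by (simp add: TT_def)
  qed
  have fV: "f \<in> {1..k+3} \<rightarrow>\<^sub>E V"
  proof
    fix i assume "i \<in> {1..k+3}"
    thus "f i \<in> V" using fi[of i] x y by (auto simp: TT_def nbr_def split: if_splits)
  next
    fix i assume "i \<notin> {1..k+3}" thus "f i = undefined" using f by auto
  qed
  have "\<forall>e\<in>S21_E k. f ` e \<in> E"
  proof
    fix e assume "e \<in> S21_E k"
    then consider j where "e = {1,j}" "2 \<le> j" "j \<le> k+2" | "e = {k+2,k+3}" by (auto simp: S21_E_def)
    thus "f ` e \<in> E"
    proof cases
      case (1 j)
      show ?thesis
      proof (cases "j = k+2")
        case True thus ?thesis using 1 f1 f2 y by (auto simp: nbr_def)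
      next
        case False thus ?thesis using 1 f1 fj[of j] by (auto simp: nbr_def)
      qed
    next
      case 2 thus ?thesis using f2 f3 by (auto simp: nbr_def)
    qed
  qed
  thus "f \<in> homs (S21_V k) (S21_E k) V E" using fV by (simp add: homs_def S21_V_def)
qed

lemma card_PiE_TT:
  "card (PiE {1..k+3} (TT k V E x y)) = card (nbr V E x) ^ k * card (nbr V E y)"
proof -
  have S: "{1..k+3} = insert 1 (insert (k+2) (insert (k+3) {2..k+1}))" by auto
  have "card (PiE {1..k+3} (TT k V E x y)) = (\<Prod>i\<in>{1..k+3}. card (TT k V E x y i))"
    by (simp add: card_PiE)
  also have "\<dots> = card (nbr V E y) * (\<Prod>i\<in>{2..k+1}. card (TT k V E x y i))"
    unfolding S by (simp add: TT_def)
  also have "(\<Prod>i\<in>{2..k+1}. card (TT k V E x y i)) = (\<Prod>i\<in>{2..k+1}. card (nbr V E x))"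
    by (rule prod.cong) (auto simp: TT_def)
  also have "\<dots> = card (nbr V E x) ^ k" by simp
  finally show ?thesis by simp
qed

lemma hom_formula:
  assumes "simple_graph V E"
  shows "hom_S21 k V E = (\<Sum>x\<in>V. \<Sum>y\<in>nbr V E x. card (nbr V E x) ^ k * card (nbr V E y))"
proof -
  have fin: "finite V" using assms by (simp add: simple_graph_def)
  have finN: "finite (nbr V E x)" for x using fin by (simp add: nbr_def)
  have finP: "finite (PiE {1..k+3} (TT k V E x y))" for x y
    by (rule finite_PiE) (auto simp: TT_def finN)
  have d1: "PiE {1..k+3} (TT k V E x y) \<inter> PiE {1..k+3} (TT k V E x' y') = {}"
    if "x \<noteq> x' \<or> y \<noteq> y'" for x y x' y'
  proof (rule ccontr)
    assume "PiE {1..k+3} (TT k V E x y) \<inter> PiE {1..k+3} (TT k V E x' y') \<noteq> {}"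
    then obtain f where f: "f \<in> PiE {1..k+3} (TT k V E x y)" "f \<in> PiE {1..k+3} (TT k V E x' y')" by blast
    have "f 1 \<in> TT k V E x y 1" "f 1 \<in> TT k V E x' y' 1" using f by auto
    moreover have "f (k+2) \<in> TT k V E x y (k+2)" "f (k+2) \<in> TT k V E x' y' (k+2)" using f by auto
    ultimately show False using that by (simp add: TT_def)
  qed
  have "hom_S21 k V E = card (\<Union>x\<in>V. \<Union>y\<in>nbr V E x. PiE {1..k+3} (TT k V E x y))"
    by (simp add: hom_count_def homs_eq)
  also have "\<dots> = (\<Sum>x\<in>V. card (\<Union>y\<in>nbr V E x. PiE {1..k+3} (TT k V E x y)))"
  proof (rule card_UN_disjoint[OF fin])
    show "\<forall>x\<in>V. finite (\<Union>y\<in>nbr V E x. PiE {1..k+3} (TT k V E x y))" using finN finP by blast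
    show "\<forall>x\<in>V. \<forall>x'\<in>V. x \<noteq> x' \<longrightarrow> (\<Union>y\<in>nbr V E x. PiE {1..k+3} (TT k V E x y)) \<inter> (\<Union>y\<in>nbr V E x'. PiE {1..k+3} (TT k V E x' y)) = {}"
      using d1 by blast
  qed
  also have "\<dots> = (\<Sum>x\<in>V. \<Sum>y\<in>nbr V E x. card (PiE {1..k+3} (TT k V E x y)))"
  proof (rule sum.cong[OF refl])
    fix x assume "x \<in> V"
    show "card (\<Union>y\<in>nbr V E x. PiE {1..k+3} (TT k V E x y)) = (\<Sum>y\<in>nbr V E x. card (PiE {1..k+3} (TT k V E x y)))"
      by (rule card_UN_disjoint[OF finN]) (use finP d1 in blast)+
  qed
  also have "\<dots> = (\<Sum>x\<in>V. \<Sum>y\<in>nbr V E x. card (nbr V E x) ^ k * card (nbr V E y))"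
    by (simp only: card_PiE_TT)
  finally show ?thesis .
qed



lemma amgm3:
  fixes u v w :: real
  assumes "0 \<le> u" "0 \<le> v" "0 \<le> w"
  shows "u * v * w \<le> (u^3+v^3+w^3)/3"
proof -
  have eq: "2*(u^3+v^3+w^3 - 3*(u * v * w)) = (u+v+w)*((u-v)^2+(v-w)^2+(w-u)^2)"
    by (simp add: algebra_simps power2_eq_square power3_eq_cube)
  have "0 \<le> (u+v+w)*((u-v)^2+(v-w)^2+(w-u)^2)" using assms by simp
  hence "0 \<le> 2*(u^3+v^3+w^3 - 3*(u * v * w))" using eq by simp
  hence "3*(u * v * w) \<le> u^3+v^3+w^3" by (simp add: algebra_simps)
  thus ?thesis by simp
qed

lemma sum_zero_pts:
  fixes a :: "'i \<Rightarrow> real"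
  assumes "finite I" "\<forall>i\<in>I. 0 \<le> a i" "sum a I = 0" "i \<in> I"
  shows "a i = 0"
  using assms sum_nonneg_eq_0_iff by blast

lemma holder3:
  fixes a b c p :: "'i \<Rightarrow> real"
  assumes fin: "finite I"
    and nn: "\<And>i. i \<in> I \<Longrightarrow> 0 \<le> a i \<and> 0 \<le> b i \<and> 0 \<le> c i \<and> 0 \<le> p i"
    and le: "\<And>i. i \<in> I \<Longrightarrow> p i ^ 3 \<le> a i * b i * c i"
  shows "(sum p I)^3 \<le> sum a I * sum b I * sum c I"
proof -
  define A where "A = sum a I"
  define B where "B = sum b I"
  define C where "C = sum c I"
  have A0: "0 \<le> A" "0 \<le> B" "0 \<le> C" using nn by (auto simp: A_def B_def C_def intro: sum_nonneg)
  have p0: "0 \<le> sum p I" using nn by (auto intro: sum_nonneg)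
  show ?thesis
  proof (cases "A = 0 \<or> B = 0 \<or> C = 0")
    case True
    have "\<forall>i\<in>I. a i * b i * c i = 0"
    proof
      fix i assume i: "i \<in> I"
      from True consider "A = 0" | "B = 0" | "C = 0" by blast
      thus "a i * b i * c i = 0"
        by cases (use sum_zero_pts[OF fin _ _ i] nn i in \<open>auto simp: A_def B_def C_def\<close>)
    qed
    have "\<forall>i\<in>I. p i = 0"
    proof
      fix i assume i: "i \<in> I"
      have "p i ^ Suc 2 \<le> 0 ^ Suc 2" using le[OF i] \<open>\<forall>i\<in>I. a i * b i * c i = 0\<close> i by simp
      hence "p i \<le> 0" by (rule power_le_imp_le_base) simp
      thus "p i = 0" using nn[OF i] by simp
    qed
    hence "sum p I = 0" by simp
    thus ?thesis using A0 by (simp add: A_def B_def C_def)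
  next
    case False
    hence pos: "0 < A" "0 < B" "0 < C" using A0 by auto
    define \<alpha> where "\<alpha> = root 3 A"
    define \<beta> where "\<beta> = root 3 B"
    define \<gamma> where "\<gamma> = root 3 C"
    have abc: "0 \<le> \<alpha>" "0 \<le> \<beta>" "0 \<le> \<gamma>" "\<alpha>^3 = A" "\<beta>^3 = B" "\<gamma>^3 = C"
      using A0 by (auto simp: \<alpha>_def \<beta>_def \<gamma>_def real_root_ge_zero)
    have key: "p i \<le> \<alpha>*\<beta>*\<gamma> * ((a i / A + b i / B + c i / C)/3)" if i: "i \<in> I" for i
    proof -
      define u where "u = root 3 (a i / A)"
      define v where "v = root 3 (b i / B)"
      define w where "w = root 3 (c i / C)"
      have uvw: "0 \<le> u" "0 \<le> v" "0 \<le> w" "u^3 = a i / A" "v^3 = b i / B" "w^3 = c i / C"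
        using nn[OF i] pos by (auto simp: u_def v_def w_def real_root_ge_zero)
      have "(\<alpha>*\<beta>*\<gamma>*(u * v * w))^3 = (\<alpha>^3*\<beta>^3*\<gamma>^3)*(u^3 * v^3 * w^3)"
        by (simp add: power_mult_distrib)
      also have "\<dots> = (A*B*C)*((a i / A)*(b i / B)*(c i / C))" by (simp only: abc uvw)
      also have "\<dots> = a i * b i * c i" using pos by simp
      finally have "p i ^ Suc 2 \<le> (\<alpha>*\<beta>*\<gamma>*(u * v * w)) ^ Suc 2" using le[OF i] by simp
      hence "p i \<le> \<alpha>*\<beta>*\<gamma>*(u * v * w)"
        by (rule power_le_imp_le_base) (use abc uvw in simp)
      also have "\<dots> \<le> \<alpha>*\<beta>*\<gamma>*((u^3+v^3+w^3)/3)"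
        by (rule mult_left_mono[OF amgm3]) (use abc uvw in simp_all)
      finally show ?thesis using uvw by simp
    qed
    have sd: "(\<Sum>i\<in>I. a i / A + b i / B + c i / C) = sum a I / A + sum b I / B + sum c I / C"
      by (simp add: sum.distrib sum_divide_distrib)
    have "sum p I \<le> (\<Sum>i\<in>I. \<alpha>*\<beta>*\<gamma> * ((a i / A + b i / B + c i / C)/3))"
      by (rule sum_mono) (rule key)
    also have "\<dots> = \<alpha>*\<beta>*\<gamma> * ((\<Sum>i\<in>I. a i / A + b i / B + c i / C)/3)"
      by (simp only: sum_distrib_left[symmetric] sum_divide_distrib[symmetric])
    also have "\<dots> = \<alpha>*\<beta>*\<gamma>" using pos unfolding sd by (simp add: A_def B_def C_def)
    finally have "sum p I \<le> \<alpha>*\<beta>*\<gamma>" .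
    hence "(sum p I)^3 \<le> (\<alpha>*\<beta>*\<gamma>)^3" using p0 by (rule power_mono)
    also have "\<dots> = A*B*C" using abc by (simp add: power_mult_distrib)
    finally show ?thesis by (simp add: A_def B_def C_def)
  qed
qed



lemma swap_nbr:
  fixes g :: "'a \<Rightarrow> real"
  assumes "finite V"
  shows "(\<Sum>x\<in>V. \<Sum>y\<in>nbr V E x. g y) = (\<Sum>y\<in>V. real (card (nbr V E y)) * g y)"
proof -
  have "(\<Sum>x\<in>V. \<Sum>y\<in>nbr V E x. g y) = (\<Sum>x\<in>V. \<Sum>y\<in>V. if {x,y} \<in> E then g y else 0)"
    unfolding nbr_def using assms by (simp add: sum.inter_filter)
  also have "\<dots> = (\<Sum>y\<in>V. \<Sum>x\<in>V. if {x,y} \<in> E then g y else 0)" by (rule sum.swap)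
  also have "\<dots> = (\<Sum>y\<in>V. real (card (nbr V E y)) * g y)"
  proof (rule sum.cong[OF refl])
    fix y assume "y \<in> V"
    have "(\<Sum>x\<in>V. if {x,y} \<in> E then g y else 0) = (\<Sum>x\<in>V. if {y,x} \<in> E then g y else 0)"
      by (simp add: insert_commute)
    also have "\<dots> = (\<Sum>x\<in>nbr V E y. g y)"
      unfolding nbr_def using assms by (simp only: sum.inter_filter)
    also have "\<dots> = real (card (nbr V E y)) * g y" by simp
    finally show "(\<Sum>x\<in>V. if {x,y} \<in> E then g y else 0) = real (card (nbr V E y)) * g y" .
  qed
  finally show ?thesis .
qed

theorem theorem3p2:
  fixes V :: "'a set" and E :: "'a set set"
  assumes "simple_graph V E"
  shows "hom_S21 0 V E ^ 3 * hom_S21 3 V E \<ge> hom_S21 2 V E ^ 3"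
proof -
  have fin: "finite V" using assms by (simp add: simple_graph_def)
  have finN: "finite (nbr V E x)" for x using fin by (simp add: nbr_def)
  define d where "d x = real (card (nbr V E x))" for x
  define s where "s x = (\<Sum>y\<in>nbr V E x. d y)" for x
  have d0: "0 \<le> d x" for x by (simp add: d_def)
  have s0: "0 \<le> s x" for x by (simp add: s_def d_def sum_nonneg)
  have H: "real (hom_S21 k V E) = (\<Sum>x\<in>V. d x ^ k * s x)" for k
    unfolding hom_formula[OF assms] d_def s_def
    by (simp add: sum_distrib_left)
  define P where "P = (\<Sum>x\<in>V. d x ^ 2)"
  have P0: "0 \<le> P" unfolding P_def by (simp add: sum_nonneg)
  have H0: "real (hom_S21 0 V E) = P"
  proof -
    have "real (hom_S21 0 V E) = (\<Sum>x\<in>V. \<Sum>y\<in>nbr V E x. d y)" by (simp add: H s_def)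
    also have "\<dots> = (\<Sum>y\<in>V. d y * d y)" using swap_nbr[OF fin, of d E] by (simp add: d_def)
    finally show ?thesis by (simp add: P_def power2_eq_square)
  qed
  define W where "W = (\<Sum>x\<in>V. s x ^ 2 * d x)"
  have hold: "(\<Sum>x\<in>V. d x ^ 2 * s x) ^ 3 \<le> (\<Sum>x\<in>V. d x ^ 3 * s x) * W * P"
    unfolding W_def P_def
    by (rule holder3[OF fin]) (auto simp: d0 s0 power_mult_distrib algebra_simps eval_nat_numeral)
  have sx: "s x ^ 2 \<le> d x * P" if x: "x \<in> V" for x
  proof -
    have "s x ^ 2 \<le> (\<Sum>y\<in>nbr V E x. d y ^ 2) * d x"
      unfolding s_def using sum_squared_le_sum_of_squares[of d "nbr V E x"] by (simp add: d_def)
    also have "(\<Sum>y\<in>nbr V E x. d y ^ 2) \<le> P"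
      unfolding P_def by (rule sum_mono2[OF fin]) (auto simp: nbr_def)
    hence "(\<Sum>y\<in>nbr V E x. d y ^ 2) * d x \<le> P * d x" by (rule mult_right_mono) (rule d0)
    finally show ?thesis by (simp add: mult.commute)
  qed
  have WP: "W \<le> P ^ 2"
  proof -
    have "W \<le> (\<Sum>x\<in>V. d x ^ 2 * P)"
      unfolding W_def
    proof (rule sum_mono)
      fix x assume "x \<in> V"
      hence "s x ^ 2 * d x \<le> (d x * P) * d x" by (rule mult_right_mono[OF sx d0])
      thus "s x ^ 2 * d x \<le> d x ^ 2 * P" by (simp add: power2_eq_square algebra_simps)
    qed
    also have "\<dots> = P ^ 2" by (simp add: P_def power2_eq_square sum_distrib_right)
    finally show ?thesis .
  qed
  have H3: "0 \<le> (\<Sum>x\<in>V. d x ^ 3 * s x)" by (simp add: sum_nonneg d0 s0)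
  have "real (hom_S21 2 V E) ^ 3 \<le> real (hom_S21 3 V E) * W * P" using hold by (simp add: H)
  also have "\<dots> \<le> real (hom_S21 3 V E) * P ^ 2 * P"
    by (intro mult_right_mono mult_left_mono WP P0) simp
  also have "\<dots> = real (hom_S21 0 V E) ^ 3 * real (hom_S21 3 V E)"
    by (simp add: H0 power2_eq_square power3_eq_cube)
  finally have "real (hom_S21 2 V E ^ 3) \<le> real (hom_S21 0 V E ^ 3 * hom_S21 3 V E)" by simp
  thus ?thesis by (simp only: of_nat_le_iff)
qed

end
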